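(* There is no connected, non-complete, $5$-regular and $1$ net-regular SRSG in $\mathcal C_1\cup\mathcal C_4\cup\mathcal C_5$ with parameters $(n,5,a,b,c)$ satisfying $(a,b)=(2,0)$.
   Context: A signed graph $\dot G=(G,\sigma)$ is a simple graph $G$ with $\sigma:E(G)\to\{\pm1\}$; adjacency matrix $A_{\dot G}$ has entries $\sigma(v_iv_j)$ for adjacent vertices and $0$ otherwise. Degree and connectedness refer to $G$; net-degree is $d^+(v)-d^-(v)$; $\rho$ net-regular means all net-degrees equal $\rho$. $\dot G$ on $n$ vertices is an SRSG if it is neither homogeneous complete nor edgeless and there are $r\in\mathbb N$, $a,b,c\in\mathbb Z$ with $(A^2_{\dot G})_{ii}=r$, $(A^2_{\dot G})_{ij}=a$ for positive edges, $b$ for negative edges, $c$ for distinct non-adjacent pairs; parameters $(n,r,a,b,c)$. Classes: $\mathcal C_1$: $a=-b$ and (complete, or non-complete with $c\neq0$); $\mathcal C_4$: $a\ne-b$, non-complete, $c=0$; $\mathcal C_5$: $a\neq-b$, non-complete, $c\notin\{0,\frac{a+b}{2}\}$. *)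

theory Defs
  imports Main
begin

definition signed_graph :: "'a set \<Rightarrow> ('a \<Rightarrow> 'a \<Rightarrow> bool) \<Rightarrow> ('a \<Rightarrow> 'a \<Rightarrow> int) \<Rightarrow> bool" where
  "signed_graph V E \<sigma> \<longleftrightarrow> finite V
     \<and> (\<forall>u v. E u v \<longrightarrow> u \<in> V \<and> v \<in> V)
     \<and> (\<forall>u v. E u v \<longrightarrow> E v u)
     \<and> (\<forall>u. \<not> E u u)
     \<and> (\<forall>u v. E u v \<longrightarrow> \<sigma> u v = \<sigma> v u \<and> (\<sigma> u v = 1 \<or> \<sigma> u v = -1))"

definition adj :: "('a \<Rightarrow> 'a \<Rightarrow> bool) \<Rightarrow> ('a \<Rightarrow> 'a \<Rightarrow> int) \<Rightarrow> 'a \<Rightarrow> 'a \<Rightarrow> int" where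
  "adj E \<sigma> u v = (if E u v then \<sigma> u v else 0)"

definition adj_sq :: "'a set \<Rightarrow> ('a \<Rightarrow> 'a \<Rightarrow> bool) \<Rightarrow> ('a \<Rightarrow> 'a \<Rightarrow> int) \<Rightarrow> 'a \<Rightarrow> 'a \<Rightarrow> int" where
  "adj_sq V E \<sigma> u v = (\<Sum>w\<in>V. adj E \<sigma> u w * adj E \<sigma> w v)"

definition complete_graph :: "'a set \<Rightarrow> ('a \<Rightarrow> 'a \<Rightarrow> bool) \<Rightarrow> bool" where
  "complete_graph V E \<longleftrightarrow> (\<forall>u\<in>V. \<forall>v\<in>V. u \<noteq> v \<longrightarrow> E u v)"

definition edgeless :: "('a \<Rightarrow> 'a \<Rightarrow> bool) \<Rightarrow> bool" where
  "edgeless E \<longleftrightarrow> (\<forall>u v. \<not> E u v)"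

definition homogeneous_complete :: "'a set \<Rightarrow> ('a \<Rightarrow> 'a \<Rightarrow> bool) \<Rightarrow> ('a \<Rightarrow> 'a \<Rightarrow> int) \<Rightarrow> bool" where
  "homogeneous_complete V E \<sigma> \<longleftrightarrow> complete_graph V E \<and>
     ((\<forall>u v. E u v \<longrightarrow> \<sigma> u v = 1) \<or> (\<forall>u v. E u v \<longrightarrow> \<sigma> u v = -1))"

definition connected_graph :: "'a set \<Rightarrow> ('a \<Rightarrow> 'a \<Rightarrow> bool) \<Rightarrow> bool" where
  "connected_graph V E \<longleftrightarrow> (\<forall>u\<in>V. \<forall>v\<in>V. E\<^sup>*\<^sup>* u v)"

definition degree :: "'a set \<Rightarrow> ('a \<Rightarrow> 'a \<Rightarrow> bool) \<Rightarrow> 'a \<Rightarrow> nat" where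
  "degree V E v = card {w\<in>V. E v w}"

definition pos_degree :: "'a set \<Rightarrow> ('a \<Rightarrow> 'a \<Rightarrow> bool) \<Rightarrow> ('a \<Rightarrow> 'a \<Rightarrow> int) \<Rightarrow> 'a \<Rightarrow> nat" where
  "pos_degree V E \<sigma> v = card {w\<in>V. E v w \<and> \<sigma> v w = 1}"

definition neg_degree :: "'a set \<Rightarrow> ('a \<Rightarrow> 'a \<Rightarrow> bool) \<Rightarrow> ('a \<Rightarrow> 'a \<Rightarrow> int) \<Rightarrow> 'a \<Rightarrow> nat" where
  "neg_degree V E \<sigma> v = card {w\<in>V. E v w \<and> \<sigma> v w = -1}"

definition net_degree :: "'a set \<Rightarrow> ('a \<Rightarrow> 'a \<Rightarrow> bool) \<Rightarrow> ('a \<Rightarrow> 'a \<Rightarrow> int) \<Rightarrow> 'a \<Rightarrow> int" where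
  "net_degree V E \<sigma> v = int (pos_degree V E \<sigma> v) - int (neg_degree V E \<sigma> v)"

definition regular :: "'a set \<Rightarrow> ('a \<Rightarrow> 'a \<Rightarrow> bool) \<Rightarrow> nat \<Rightarrow> bool" where
  "regular V E k \<longleftrightarrow> (\<forall>v\<in>V. degree V E v = k)"

definition net_regular :: "'a set \<Rightarrow> ('a \<Rightarrow> 'a \<Rightarrow> bool) \<Rightarrow> ('a \<Rightarrow> 'a \<Rightarrow> int) \<Rightarrow> int \<Rightarrow> bool" where
  "net_regular V E \<sigma> \<rho> \<longleftrightarrow> (\<forall>v\<in>V. net_degree V E \<sigma> v = \<rho>)"

definition srsg :: "'a set \<Rightarrow> ('a \<Rightarrow> 'a \<Rightarrow> bool) \<Rightarrow> ('a \<Rightarrow> 'a \<Rightarrow> int)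
    \<Rightarrow> nat \<Rightarrow> nat \<Rightarrow> int \<Rightarrow> int \<Rightarrow> int \<Rightarrow> bool" where
  "srsg V E \<sigma> n r a b c \<longleftrightarrow> signed_graph V E \<sigma> \<and> n = card V
     \<and> \<not> homogeneous_complete V E \<sigma> \<and> \<not> edgeless E
     \<and> (\<forall>v\<in>V. adj_sq V E \<sigma> v v = int r)
     \<and> (\<forall>u\<in>V. \<forall>v\<in>V. E u v \<and> \<sigma> u v = 1 \<longrightarrow> adj_sq V E \<sigma> u v = a)
     \<and> (\<forall>u\<in>V. \<forall>v\<in>V. E u v \<and> \<sigma> u v = -1 \<longrightarrow> adj_sq V E \<sigma> u v = b)
     \<and> (\<forall>u\<in>V. \<forall>v\<in>V. u \<noteq> v \<and> \<not> E u v \<longrightarrow> adj_sq V E \<sigma> u v = c)"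

text \<open>Classes C1, C4, C5 (the condition c \<noteq> (a+b)/2 is written 2c \<noteq> a+b).\<close>
definition class_C1 :: "'a set \<Rightarrow> ('a \<Rightarrow> 'a \<Rightarrow> bool) \<Rightarrow> int \<Rightarrow> int \<Rightarrow> int \<Rightarrow> bool" where
  "class_C1 V E a b c \<longleftrightarrow> a = - b \<and> (complete_graph V E \<or> (\<not> complete_graph V E \<and> c \<noteq> 0))"

definition class_C4 :: "'a set \<Rightarrow> ('a \<Rightarrow> 'a \<Rightarrow> bool) \<Rightarrow> int \<Rightarrow> int \<Rightarrow> int \<Rightarrow> bool" where
  "class_C4 V E a b c \<longleftrightarrow> a \<noteq> - b \<and> \<not> complete_graph V E \<and> c = 0"

definition class_C5 :: "'a set \<Rightarrow> ('a \<Rightarrow> 'a \<Rightarrow> bool) \<Rightarrow> int \<Rightarrow> int \<Rightarrow> int \<Rightarrow> bool" where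
  "class_C5 V E a b c \<longleftrightarrow> a \<noteq> - b \<and> \<not> complete_graph V E \<and> c \<noteq> 0 \<and> 2 * c \<noteq> a + b"

end

theory Submission
  imports Defs
begin


locale SG =
  fixes V :: "'a set" and E :: "'a \<Rightarrow> 'a \<Rightarrow> bool" and \<sigma> :: "'a \<Rightarrow> 'a \<Rightarrow> int" and c :: int
  assumes fin: "finite V"
  and Ein: "\<And>u v. E u v \<Longrightarrow> u \<in> V \<and> v \<in> V"
  and Esym: "\<And>u v. E u v \<Longrightarrow> E v u"
  and Eirr: "\<And>u. \<not> E u u"
  and ssym: "\<And>u v. E u v \<Longrightarrow> \<sigma> u v = \<sigma> v u"
  and sval: "\<And>u v. E u v \<Longrightarrow> \<sigma> u v = 1 \<or> \<sigma> u v = -1"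
  and pc: "\<And>u. u \<in> V \<Longrightarrow> card {w\<in>V. E u w \<and> \<sigma> u w = 1} = 3"
  and mc: "\<And>u. u \<in> V \<Longrightarrow> card {w\<in>V. E u w \<and> \<sigma> u w = -1} = 2"
  and sq0: "\<And>u. u \<in> V \<Longrightarrow> adj_sq V E \<sigma> u u = 5"
  and sqp: "\<And>u v. u \<in> V \<Longrightarrow> v \<in> V \<Longrightarrow> E u v \<Longrightarrow> \<sigma> u v = 1 \<Longrightarrow> adj_sq V E \<sigma> u v = 2"
  and sqn: "\<And>u v. u \<in> V \<Longrightarrow> v \<in> V \<Longrightarrow> E u v \<Longrightarrow> \<sigma> u v = -1 \<Longrightarrow> adj_sq V E \<sigma> u v = 0"
  and sqc: "\<And>u v. u \<in> V \<Longrightarrow> v \<in> V \<Longrightarrow> u \<noteq> v \<Longrightarrow> \<not> E u v \<Longrightarrow> adj_sq V E \<sigma> u v = c"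
begin

definition "P u = {w\<in>V. E u w \<and> \<sigma> u w = 1}"
definition "M u = {w\<in>V. E u w \<and> \<sigma> u w = -1}"
definition "R u = {w\<in>V. w \<noteq> u \<and> \<not> E u w}"
abbreviation "A \<equiv> adj E \<sigma>"

lemma A_sym: "A x y = A y x"
proof (cases "E x y")
  case True
  then show ?thesis unfolding adj_def using Esym[OF True] ssym[OF True] by simp
next
  case False
  then have "\<not> E y x" using Esym by blast
  then show ?thesis unfolding adj_def using False by simp
qed

lemma A_1: "A x y = 1 \<longleftrightarrow> y \<in> P x"
  unfolding adj_def P_def using Ein by auto

lemma A_m1: "A x y = -1 \<longleftrightarrow> y \<in> M x"
  unfolding adj_def M_def using Ein by auto

lemma A_0: "A x y = 0 \<longleftrightarrow> \<not> E x y"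
  unfolding adj_def using sval by fastforce

lemma A_cases: "A x y = 1 \<or> A x y = 0 \<or> A x y = -1"
  unfolding adj_def using sval by auto

lemma P_sym: "y \<in> P x \<longleftrightarrow> x \<in> P y"
  by (metis A_1 A_sym)

lemma M_sym: "y \<in> M x \<longleftrightarrow> x \<in> M y"
  by (metis A_m1 A_sym)

lemma P_sub: "P u \<subseteq> V" and M_sub: "M u \<subseteq> V" and R_sub: "R u \<subseteq> V"
  unfolding P_def M_def R_def by auto

lemma fin_P: "finite (P u)" and fin_M: "finite (M u)" and fin_R: "finite (R u)"
  using finite_subset[OF P_sub fin] finite_subset[OF M_sub fin] finite_subset[OF R_sub fin] by auto

lemma PM_disj: "P u \<inter> M u = {}"
  unfolding P_def M_def by auto

lemma notin_P: "u \<notin> P u" and notin_M: "u \<notin> M u"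
  unfolding P_def M_def using Eirr by auto

lemma P_E: "w \<in> P u \<Longrightarrow> E u w" and M_E: "w \<in> M u \<Longrightarrow> E u w"
  unfolding P_def M_def by auto

lemma E_PM: "E u w \<Longrightarrow> w \<in> P u \<or> w \<in> M u"
  unfolding P_def M_def using Ein sval by auto

lemma cardP: "u \<in> V \<Longrightarrow> card (P u) = 3" unfolding P_def by (rule pc)
lemma cardM: "u \<in> V \<Longrightarrow> card (M u) = 2" unfolding M_def by (rule mc)

lemma sum_A:
  assumes "u \<in> V"
  shows "(\<Sum>x\<in>V. A u x * f x) = (\<Sum>x\<in>P u. f x) - (\<Sum>x\<in>M u. f x)"
proof -
  have "(\<Sum>x\<in>V. A u x * f x) = (\<Sum>x\<in>V. (if x \<in> P u then f x else 0) - (if x \<in> M u then f x else 0))"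
  proof (rule sum.cong)
    fix x assume "x \<in> V"
    show "A u x * f x = (if x \<in> P u then f x else 0) - (if x \<in> M u then f x else 0)"
    proof -
      have "x \<notin> P u \<or> x \<notin> M u" using PM_disj[of u] by blast
      moreover have "A u x = 1 \<or> A u x = 0 \<or> A u x = -1" by (rule A_cases)
      moreover have "A u x = 1 \<longleftrightarrow> x \<in> P u" by (rule A_1)
      moreover have "A u x = -1 \<longleftrightarrow> x \<in> M u" by (rule A_m1)
      ultimately show ?thesis by (elim disjE) auto
    qed
  qed simp
  also have "\<dots> = (\<Sum>x\<in>V. if x \<in> P u then f x else 0) - (\<Sum>x\<in>V. if x \<in> M u then f x else 0)"
    by (simp only: sum_subtractf)
  also have "\<dots> = (\<Sum>x\<in>V \<inter> P u. f x) - (\<Sum>x\<in>V \<inter> M u. f x)"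
    using fin by (simp add: sum.inter_restrict)
  also have "V \<inter> P u = P u" using P_sub by blast
  also have "V \<inter> M u = M u" using M_sub by blast
  finally show ?thesis .
qed

lemma sq_exp: "u \<in> V \<Longrightarrow> adj_sq V E \<sigma> u v = (\<Sum>x\<in>P u. A x v) - (\<Sum>x\<in>M u. A x v)"
  unfolding adj_sq_def using sum_A[of u "\<lambda>x. A x v"] by simp

lemma rowsum: assumes "u \<in> V" shows "(\<Sum>x\<in>V. A u x) = 1"
proof -
  have "(\<Sum>x\<in>V. A u x * 1) = (\<Sum>x\<in>P u. 1) - (\<Sum>x\<in>M u. (1::int))"
    by (rule sum_A[OF assms, of "\<lambda>_. 1"])
  then show ?thesis using cardP[OF assms] cardM[OF assms] by simp
qed

lemma sqsum: assumes "u \<in> V" shows "(\<Sum>v\<in>V. adj_sq V E \<sigma> u v) = 1"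
proof -
  have "(\<Sum>v\<in>V. adj_sq V E \<sigma> u v) = (\<Sum>v\<in>V. \<Sum>w\<in>V. A u w * A w v)"
    unfolding adj_sq_def ..
  also have "\<dots> = (\<Sum>w\<in>V. \<Sum>v\<in>V. A u w * A w v)" by (rule sum.swap[of "\<lambda>v w. A u w * A w v"])
  also have "\<dots> = (\<Sum>w\<in>V. A u w * (\<Sum>v\<in>V. A w v))"
    by (simp only: sum_distrib_left)
  also have "\<dots> = (\<Sum>w\<in>V. A u w)"
    by (rule sum.cong) (simp_all add: rowsum)
  also have "\<dots> = 1" by (rule rowsum[OF assms])
  finally show ?thesis .
qed

lemma noM3: "a \<in> M x \<Longrightarrow> b \<in> M x \<Longrightarrow> d \<in> M x \<Longrightarrow> a \<noteq> b \<Longrightarrow> a \<noteq> d \<Longrightarrow> b \<noteq> d \<Longrightarrow> False"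
proof -
  assume h: "a \<in> M x" "b \<in> M x" "d \<in> M x" "a \<noteq> b" "a \<noteq> d" "b \<noteq> d"
  then have "x \<in> V" using M_E Ein by blast
  have "card {a,b,d} \<le> card (M x)" using h fin_M by (intro card_mono) auto
  moreover have "card {a,b,d} = 3" using h(4-6) by simp
  ultimately show False using cardM[OF \<open>x \<in> V\<close>] by linarith
qed

lemma noP4: "a \<in> P x \<Longrightarrow> b \<in> P x \<Longrightarrow> d \<in> P x \<Longrightarrow> e \<in> P x \<Longrightarrow> a \<noteq> b \<Longrightarrow> a \<noteq> d \<Longrightarrow> a \<noteq> e
   \<Longrightarrow> b \<noteq> d \<Longrightarrow> b \<noteq> e \<Longrightarrow> d \<noteq> e \<Longrightarrow> False"
proof -
  assume h: "a \<in> P x" "b \<in> P x" "d \<in> P x" "e \<in> P x" "a \<noteq> b" "a \<noteq> d" "a \<noteq> e" "b \<noteq> d" "b \<noteq> e" "d \<noteq> e"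
  then have "x \<in> V" using P_E Ein by blast
  have "card {a,b,d,e} \<le> card (P x)" using h fin_P by (intro card_mono) auto
  moreover have "card {a,b,d,e} = 4" using h(5-10) by simp
  ultimately show False using cardP[OF \<open>x \<in> V\<close>] by linarith
qed

end


context SG begin

lemma A_bnd: "-1 \<le> A x y \<and> A x y \<le> 1"
  using A_cases[of x y] by auto

lemma A_self: "A x x = 0"
  using A_0 Eirr by blast

lemma local_str:
  assumes u: "u \<in> V"
  shows "(\<forall>p\<in>P u. \<forall>q\<in>P u. p \<noteq> q \<longrightarrow> q \<in> P p) \<and> (\<forall>m\<in>M u. \<forall>x. E u x \<longrightarrow> x \<noteq> m \<longrightarrow> \<not> E m x)"
proof -
  obtain p1 p2 p3 where Pu: "P u = {p1,p2,p3}" and d12: "p1 \<noteq> p2" and d23: "p2 \<noteq> p3" and d13: "p1 \<noteq> p3"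
    using cardP[OF u] unfolding card_3_iff by blast
  obtain m1 m2 where Mu: "M u = {m1,m2}" and dm: "m1 \<noteq> m2"
    using cardM[OF u] unfolding card_2_iff by blast
  have p1P: "p1 \<in> P u" and p2P: "p2 \<in> P u" and p3P: "p3 \<in> P u" using Pu by auto
  have m1M: "m1 \<in> M u" and m2M: "m2 \<in> M u" using Mu by auto
  have pm: "p1 \<noteq> m1" "p1 \<noteq> m2" "p2 \<noteq> m1" "p2 \<noteq> m2" "p3 \<noteq> m1" "p3 \<noteq> m2"
    using p1P p2P p3P m1M m2M PM_disj[of u] by blast+
  have up: "u \<noteq> p1" "u \<noteq> p2" "u \<noteq> p3" "u \<noteq> m1" "u \<noteq> m2"
    using p1P p2P p3P m1M m2M notin_P[of u] notin_M[of u] by metis+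
  have uinP: "u \<in> P p1" "u \<in> P p2" "u \<in> P p3" using p1P p2P p3P P_sym by blast+
  have uinM: "u \<in> M m1" "u \<in> M m2" using m1M m2M M_sym by blast+
  have ex: "adj_sq V E \<sigma> u w = A p1 w + A p2 w + A p3 w - (A m1 w + A m2 w)" for w
    using sq_exp[OF u, of w] Pu Mu d12 d23 d13 dm by simp
  have sq2: "adj_sq V E \<sigma> u p = 2" if "p \<in> P u" for p
    using that u sqp unfolding P_def by blast
  have sq0': "adj_sq V E \<sigma> u m = 0" if "m \<in> M u" for m
    using that u sqn unfolding M_def by blast
  have b1: "A p1 p2 + A p1 p3 - (A p1 m1 + A p1 m2) = 2"
    using ex[of p1] sq2[OF p1P] A_self[of p1] A_sym[of p2 p1] A_sym[of p3 p1] A_sym[of m1 p1] A_sym[of m2 p1] by linarith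
  have b2: "A p1 p2 + A p2 p3 - (A p2 m1 + A p2 m2) = 2"
    using ex[of p2] sq2[OF p2P] A_self[of p2] A_sym[of p3 p2] A_sym[of m1 p2] A_sym[of m2 p2] by linarith
  have b3: "A p1 p3 + A p2 p3 - (A p3 m1 + A p3 m2) = 2"
    using ex[of p3] sq2[OF p3P] A_self[of p3] A_sym[of m1 p3] A_sym[of m2 p3] by linarith
  have a1: "A p1 m1 + A p2 m1 + A p3 m1 - A m1 m2 = 0"
    using ex[of m1] sq0'[OF m1M] A_self[of m1] A_sym[of m2 m1] by linarith
  have a2: "A p1 m2 + A p2 m2 + A p3 m2 - A m1 m2 = 0"
    using ex[of m2] sq0'[OF m2M] A_self[of m2] by linarith
  have D1: "A p m1 \<noteq> -1" if "A m1 m2 = -1" "p \<in> P u" for p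
  proof
    assume h: "A p m1 = -1"
    have "m2 \<in> M m1" using that(1) A_m1 by blast
    moreover have "p \<in> M m1" using h A_sym[of p m1] A_m1 by simp
    moreover have "p \<noteq> m2" "u \<noteq> p" using that(2) m2M PM_disj[of u] notin_P[of u] by blast+
    ultimately show False using noM3[of u m1 m2 p] uinM(1) up(5) by blast
  qed
  have z0: "A m1 m2 = 0"
  proof -
    have "A m1 m2 \<noteq> -1"
    proof
      assume h: "A m1 m2 = -1"
      have "A p1 m1 \<ge> 0" "A p2 m1 \<ge> 0" "A p3 m1 \<ge> 0"
        using D1[OF h p1P] D1[OF h p2P] D1[OF h p3P] A_cases[of p1 m1] A_cases[of p2 m1] A_cases[of p3 m1] by auto
      then show False using a1 h by linarith
    qed
    moreover have "A m1 m2 \<le> 0"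
      using b1 b2 b3 a1 a2 A_bnd[of p1 p2] A_bnd[of p1 p3] A_bnd[of p2 p3] by linarith
    ultimately show ?thesis using A_cases[of m1 m2] by auto
  qed
  have y: "A p1 p2 = 1" "A p1 p3 = 1" "A p2 p3 = 1"
    using b1 b2 b3 a1 a2 z0 A_bnd[of p1 p2] A_bnd[of p1 p3] A_bnd[of p2 p3] by linarith+
  have P12: "p2 \<in> P p1" "p3 \<in> P p1" "p3 \<in> P p2" using y A_1 by blast+
  have P21: "p1 \<in> P p2" "p1 \<in> P p3" "p2 \<in> P p3" using P12 P_sym by blast+
  have D2: "A p m \<noteq> 1" if "p \<in> P u" "m \<in> M u" for p m
  proof
    assume h: "A p m = 1"
    then have mP: "m \<in> P p" using A_1 by blast
    have "p = p1 \<or> p = p2 \<or> p = p3" using that(1) Pu by auto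
    moreover have "m \<noteq> p1" "m \<noteq> p2" "m \<noteq> p3" "m \<noteq> u" using pm that(2) Mu up by auto
    ultimately show False
      using noP4[of u p1 p2 p3 m] noP4[of u p2 p1 p3 m] noP4[of u p3 p1 p2 m] uinP P12 P21 mP up d12 d23 d13
      by metis
  qed
  have x0: "A p m = 0" if "p \<in> P u" "m \<in> M u" for p m
  proof -
    have "p = p1 \<or> p = p2 \<or> p = p3" using that(1) Pu by auto
    then have "A p m1 + A p m2 = 0" using b1 b2 b3 y by auto
    moreover have "A p m1 \<noteq> 1" "A p m2 \<noteq> 1" using D2 that(1) m1M m2M by blast+
    moreover have "m = m1 \<or> m = m2" using that(2) Mu by auto
    ultimately show ?thesis using A_cases[of p m1] A_cases[of p m2] by auto
  qed
  show ?thesis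
  proof (intro conjI ballI allI impI)
    fix p q assume "p \<in> P u" "q \<in> P u" "p \<noteq> q"
    then show "q \<in> P p" using Pu P12 P21 by auto
  next
    fix m x assume m: "m \<in> M u" and ux: "E u x" and xm: "x \<noteq> m"
    have "x \<in> P u \<or> x \<in> M u" using E_PM[OF ux] .
    then have "A m x = 0"
    proof
      assume "x \<in> P u" then show ?thesis using x0[OF _ m] A_sym by metis
    next
      assume "x \<in> M u"
      then have "x = m1 \<and> m = m2 \<or> x = m2 \<and> m = m1" using m xm Mu by auto
      then show ?thesis using z0 A_sym by metis
    qed
    then show "\<not> E m x" using A_0 by blast
  qed
qed

end


context SG begin

lemma split_sum:
  assumes u: "u \<in> V"
  shows "(\<Sum>v\<in>V. adj_sq V E \<sigma> u v) = 11 + c * int (card (R u))"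
proof -
  have eq: "adj_sq V E \<sigma> u v = (if v = u then 5 else 0) + (if v \<in> P u then 2 else 0) + (if v \<in> R u then c else 0)"
    if v: "v \<in> V" for v
  proof (cases "v = u")
    case True
    then show ?thesis using sq0[OF u] notin_P[of u] unfolding R_def by simp
  next
    case False
    show ?thesis
    proof (cases "E u v")
      case True
      then have "v \<notin> R u" unfolding R_def by simp
      moreover have "v \<in> P u \<or> v \<in> M u" using E_PM[OF True] .
      moreover have "v \<in> P u \<Longrightarrow> adj_sq V E \<sigma> u v = 2" using sqp[OF u v True] unfolding P_def by simp
      moreover have "v \<in> M u \<Longrightarrow> adj_sq V E \<sigma> u v = 0" using sqn[OF u v True] unfolding M_def by simp
      moreover have "v \<in> M u \<Longrightarrow> v \<notin> P u" using PM_disj[of u] by blast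
      ultimately show ?thesis using False by auto
    next
      case nE: False
      then have "v \<in> R u" "v \<notin> P u" using v False unfolding R_def P_def by auto
      then show ?thesis using sqc[OF u v] False nE by auto
    qed
  qed
  have "(\<Sum>v\<in>V. adj_sq V E \<sigma> u v) = (\<Sum>v\<in>V. (if v = u then 5 else 0) + (if v \<in> P u then 2 else 0) + (if v \<in> R u then c else 0))"
    by (rule sum.cong) (simp_all add: eq)
  also have "\<dots> = (\<Sum>v\<in>V. if v = u then 5 else 0) + (\<Sum>v\<in>V. if v \<in> P u then 2 else 0) + (\<Sum>v\<in>V. if v \<in> R u then c else 0)"
    by (simp only: sum.distrib)
  also have "(\<Sum>v\<in>V. if v = u then 5 else 0) = (5::int)" using fin u by simp
  also have "(\<Sum>v\<in>V. if v \<in> P u then 2 else 0) = (\<Sum>v\<in>V \<inter> P u. (2::int))"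
    using sum.inter_restrict[OF fin, of "\<lambda>_. (2::int)" "P u"] by simp
  also have "V \<inter> P u = P u" using P_sub by blast
  also have "(\<Sum>v\<in>V. if v \<in> R u then c else 0) = (\<Sum>v\<in>V \<inter> R u. c)"
    using sum.inter_restrict[OF fin, of "\<lambda>_. c" "R u"] by simp
  also have "V \<inter> R u = R u" using R_sub by blast
  finally show ?thesis using cardP[OF u] by simp
qed

lemma final:
  assumes u: "u \<in> V"
  shows False
proof -
  define k where "k = card (R u)"
  have ck: "c * int k = -10" using sqsum[OF u] split_sum[OF u] unfolding k_def by simp
  obtain m1 m2 where Mu: "M u = {m1,m2}" and dm: "m1 \<noteq> m2"
    using cardM[OF u] unfolding card_2_iff by blast
  have m1M: "m1 \<in> M u" and m2M: "m2 \<in> M u" using Mu by auto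
  note Lu = local_str[OF u]
  have mV: "m \<in> V" if "m \<in> M u" for m using that M_sub by blast
  have Eum: "E u m" if "m \<in> M u" for m using that M_E by blast
  have PR: "P m \<subseteq> R u" if m: "m \<in> M u" for m
  proof
    fix w assume w: "w \<in> P m"
    have "w \<in> V" using w P_sub by blast
    moreover have "w \<noteq> u"
    proof
      assume "w = u"
      then have "u \<in> P m" using w by simp
      moreover have "u \<in> M m" using m M_sym by blast
      ultimately show False using PM_disj[of m] by blast
    qed
    moreover have "\<not> E u w"
    proof
      assume "E u w"
      moreover have "w \<noteq> m" using w notin_P by blast
      ultimately have "\<not> E m w" using Lu m by blast
      then show False using w P_E by blast
    qed
    ultimately show "w \<in> R u" unfolding R_def by blast
  qed
  have disj: "P m1 \<inter> P m2 = {}"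
  proof (rule ccontr)
    assume "P m1 \<inter> P m2 \<noteq> {}"
    then obtain w where w1: "w \<in> P m1" and w2: "w \<in> P m2" by blast
    have wV: "w \<in> V" using w1 P_sub by blast
    have "m1 \<in> P w" "m2 \<in> P w" using w1 w2 P_sym by blast+
    then have "m2 \<in> P m1" using local_str[OF wV] dm by blast
    then have "E m1 m2" using P_E by blast
    moreover have "\<not> E m1 m2"
    proof -
      have "\<forall>x. E u x \<longrightarrow> x \<noteq> m1 \<longrightarrow> \<not> E m1 x" using Lu m1M by blast
      then show ?thesis using Eum[OF m2M] dm by metis
    qed
    ultimately show False by blast
  qed
  have c6: "card (P m1 \<union> P m2) = 6"
    using card_Un_disjoint[OF fin_P fin_P disj] cardP[OF mV[OF m1M]] cardP[OF mV[OF m2M]] by simp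
  have "P m1 \<union> P m2 \<subseteq> R u" using PR m1M m2M by blast
  then have k6: "6 \<le> k" using card_mono[OF fin_R] c6 unfolding k_def by metis
  have cneg: "c < 0"
  proof (rule ccontr)
    assume "\<not> c < 0"
    then have "c * int k \<ge> 0" by simp
    then show False using ck by simp
  qed
  have cm1: "c = -1"
  proof (rule ccontr)
    assume "c \<noteq> -1"
    then have "c \<le> -2" using cneg by simp
    then have "c * int k \<le> -2 * int k" by (intro mult_right_mono) simp_all
    then show False using ck k6 by simp
  qed
  have k10: "k = 10" using ck cm1 by simp
  obtain v where vR: "v \<in> R u" and v1: "v \<notin> P m1" and v2: "v \<notin> P m2"
  proof -
    have "\<not> R u \<subseteq> P m1 \<union> P m2"
    proof
      assume "R u \<subseteq> P m1 \<union> P m2"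
      then have "k \<le> 6" using card_mono[OF finite_UnI[OF fin_P fin_P]] c6 unfolding k_def by metis
      then show False using k10 by simp
    qed
    then show ?thesis using that by blast
  qed
  define Good where "Good w \<longleftrightarrow> w \<in> R u \<and> w \<notin> P m1 \<and> w \<notin> P m2" for w
  have mixed: "\<exists>p\<in>P u. w \<in> M p" if g: "Good w" for w
  proof (rule ccontr)
    assume nm: "\<not> (\<exists>p\<in>P u. w \<in> M p)"
    have wR: "w \<in> V" "w \<noteq> u" "\<not> E u w" using g unfolding Good_def R_def by auto
    have "adj_sq V E \<sigma> u w = -1" using sqc[OF u wR(1)] wR(2,3) cm1 by auto
    then have eq: "(\<Sum>x\<in>P u. A x w) - (\<Sum>x\<in>M u. A x w) = -1" using sq_exp[OF u] by simp
    have "(\<Sum>x\<in>P u. A x w) \<ge> 0"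
    proof (rule sum_nonneg)
      fix x assume "x \<in> P u"
      then have "A x w \<noteq> -1" using nm A_m1 by blast
      then show "A x w \<ge> 0" using A_cases[of x w] by auto
    qed
    moreover have "(\<Sum>x\<in>M u. A x w) \<le> 0"
    proof (rule sum_nonpos)
      fix x assume "x \<in> M u"
      then have "x = m1 \<or> x = m2" using Mu by auto
      then have "A x w \<noteq> 1" using g A_1 unfolding Good_def by blast
      then show "A x w \<le> 0" using A_cases[of x w] by auto
    qed
    ultimately show False using eq by linarith
  qed
  have closure: "Good w" if g: "Good y" and w: "w \<in> P y" for y w
  proof -
    have yR: "y \<in> V" "y \<noteq> u" "\<not> E u y" using g unfolding Good_def R_def by auto
    have wV: "w \<in> V" using w P_sub by blast
    have yw: "y \<in> P w" using w P_sym by blast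
    note Lw = local_str[OF wV]
    have "w \<noteq> u"
    proof
      assume "w = u"
      then have "y \<in> P u" using yw by simp
      then show False using yR P_E by blast
    qed
    moreover have "\<not> E u w"
    proof
      assume "E u w"
      then have "w \<in> P u \<or> w \<in> M u" using E_PM by blast
      then show False
      proof
        assume "w \<in> P u"
        then have "u \<in> P w" using P_sym by blast
        moreover have "u \<noteq> y" using yR(2) by simp
        ultimately have "y \<in> P u" using Lw yw by blast
        then show False using yR P_E by blast
      next
        assume "w \<in> M u"
        then have "w = m1 \<or> w = m2" using Mu by auto
        then show False using yw g unfolding Good_def by blast
      qed
    qed
    moreover have "w \<notin> P m" if m: "m = m1 \<or> m = m2" for m
    proof
      assume "w \<in> P m"
      then have "m \<in> P w" using P_sym by blast
      moreover have "m \<noteq> y"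
      proof
        assume "m = y"
        then have "E u y" using m Eum m1M m2M by blast
        then show False using yR by blast
      qed
      ultimately have "y \<in> P m" using Lw yw by blast
      then show False using m g unfolding Good_def by blast
    qed
    ultimately show ?thesis unfolding Good_def R_def using wV by blast
  qed
  have vV: "v \<in> V" using vR R_sub by blast
  have gv: "Good v" unfolding Good_def using vR v1 v2 by blast
  define K where "K = insert v (P v)"
  have cK: "card K = 4" unfolding K_def using cardP[OF vV] notin_P[of v] fin_P[of v] by simp
  have gK: "Good w" if "w \<in> K" for w
    using that gv closure[OF gv] unfolding K_def by blast
  define f where "f w = (SOME p. p \<in> P u \<and> w \<in> M p)" for w
  have fK: "f w \<in> P u \<and> w \<in> M (f w)" if "w \<in> K" for w
  proof -
    have "\<exists>p. p \<in> P u \<and> w \<in> M p" using mixed[OF gK[OF that]] by blast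
    then show ?thesis unfolding f_def by (rule someI_ex)
  qed
  have "\<not> inj_on f K"
  proof
    assume "inj_on f K"
    moreover have "f ` K \<subseteq> P u" using fK by blast
    ultimately have "card K \<le> card (P u)" using card_inj_on_le fin_P by metis
    then show False using cK cardP[OF u] by simp
  qed
  then obtain w1 w2 where w1: "w1 \<in> K" and w2: "w2 \<in> K" and ne: "w1 \<noteq> w2" and feq: "f w1 = f w2"
    unfolding inj_on_def by blast
  define p where "p = f w1"
  have pP: "p \<in> P u" and w1M: "w1 \<in> M p" using fK[OF w1] p_def by auto
  have w2M: "w2 \<in> M p" using fK[OF w2] p_def feq by auto
  have pV: "p \<in> V" using pP P_sub by blast
  have "E w1 w2"
  proof (cases "w1 = v")
    case True
    then have "w2 \<in> P v" using w2 ne unfolding K_def by auto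
    then show ?thesis using True P_E by blast
  next
    case False
    then have w1P: "w1 \<in> P v" using w1 unfolding K_def by auto
    show ?thesis
    proof (cases "w2 = v")
      case True
      then show ?thesis using w1P P_E Esym by blast
    next
      case False
      then have "w2 \<in> P v" using w2 unfolding K_def by auto
      then have "w2 \<in> P w1" using local_str[OF vV] w1P ne by blast
      then show ?thesis using P_E by blast
    qed
  qed
  moreover have "\<not> E w1 w2"
  proof -
    have "w2 \<noteq> w1" using ne by simp
    then show ?thesis using local_str[OF pV] w1M M_E[OF w2M] by blast
  qed
  ultimately show False by blast
qed

end



lemma deg_split:
  assumes fin: "finite V" and sval: "\<And>u v. E u v \<Longrightarrow> \<sigma> u v = 1 \<or> \<sigma> u v = -1"
    and reg: "regular V E 5" and nr: "net_regular V E \<sigma> 1" and u: "u \<in> V"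
  shows "card {w\<in>V. E u w \<and> \<sigma> u w = 1} = 3 \<and> card {w\<in>V. E u w \<and> \<sigma> u w = -1} = 2"
proof -
  let ?P = "{w\<in>V. E u w \<and> \<sigma> u w = 1}" and ?M = "{w\<in>V. E u w \<and> \<sigma> u w = -1}"
  have d: "card {w\<in>V. E u w} = 5" using reg u unfolding regular_def degree_def by blast
  have n: "int (card ?P) - int (card ?M) = 1"
    using nr u unfolding net_regular_def net_degree_def pos_degree_def neg_degree_def by blast
  have un: "{w\<in>V. E u w} = ?P \<union> ?M" using sval by blast
  have dj: "?P \<inter> ?M = {}" by auto
  have "card ({w\<in>V. E u w}) = card ?P + card ?M"
    unfolding un by (rule card_Un_disjoint) (use fin dj in auto)
  then show ?thesis using d n by linarith
qed

theorem mainTheorem8: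
  fixes V :: "'a set" and E :: "'a \<Rightarrow> 'a \<Rightarrow> bool" and \<sigma> :: "'a \<Rightarrow> 'a \<Rightarrow> int"
    and n :: nat and a b c :: int
  assumes "srsg V E \<sigma> n 5 a b c"
    and "connected_graph V E"
    and "\<not> complete_graph V E"
    and "regular V E 5"
    and "net_regular V E \<sigma> 1"
    and "class_C1 V E a b c \<or> class_C4 V E a b c \<or> class_C5 V E a b c"
  shows "\<not> (a = 2 \<and> b = 0)"
proof
  assume ab: "a = 2 \<and> b = 0"
  have all: "signed_graph V E \<sigma> \<and> n = card V \<and> \<not> homogeneous_complete V E \<sigma> \<and> \<not> edgeless E
     \<and> (\<forall>v\<in>V. adj_sq V E \<sigma> v v = int 5)
     \<and> (\<forall>u\<in>V. \<forall>v\<in>V. E u v \<and> \<sigma> u v = 1 \<longrightarrow> adj_sq V E \<sigma> u v = a)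
     \<and> (\<forall>u\<in>V. \<forall>v\<in>V. E u v \<and> \<sigma> u v = -1 \<longrightarrow> adj_sq V E \<sigma> u v = b)
     \<and> (\<forall>u\<in>V. \<forall>v\<in>V. u \<noteq> v \<and> \<not> E u v \<longrightarrow> adj_sq V E \<sigma> u v = c)"
    using assms(1) unfolding srsg_def .
  have sg: "signed_graph V E \<sigma>" using all by (elim conjE) assumption
  have ne: "\<not> edgeless E" using all by (elim conjE) assumption
  have dg: "\<forall>v\<in>V. adj_sq V E \<sigma> v v = int 5" using all by (elim conjE) assumption
  have pa: "\<forall>u\<in>V. \<forall>v\<in>V. E u v \<and> \<sigma> u v = 1 \<longrightarrow> adj_sq V E \<sigma> u v = a"
    using all by (elim conjE) assumption
  have pb: "\<forall>u\<in>V. \<forall>v\<in>V. E u v \<and> \<sigma> u v = -1 \<longrightarrow> adj_sq V E \<sigma> u v = b"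
    using all by (elim conjE) assumption
  have pc: "\<forall>u\<in>V. \<forall>v\<in>V. u \<noteq> v \<and> \<not> E u v \<longrightarrow> adj_sq V E \<sigma> u v = c"
    using all by (elim conjE) assumption
  have fin: "finite V" and Ein: "\<And>u v. E u v \<Longrightarrow> u \<in> V \<and> v \<in> V"
    and Esym: "\<And>u v. E u v \<Longrightarrow> E v u" and Eirr: "\<And>u. \<not> E u u"
    and ssym: "\<And>u v. E u v \<Longrightarrow> \<sigma> u v = \<sigma> v u"
    and sval: "\<And>u v. E u v \<Longrightarrow> \<sigma> u v = 1 \<or> \<sigma> u v = -1"
    using sg unfolding signed_graph_def by (elim conjE; blast)+
  have "SG V E \<sigma> c"
  proof (unfold_locales)
    show "finite V" by (rule fin)
    show "\<And>u v. E u v \<Longrightarrow> u \<in> V \<and> v \<in> V" by (rule Ein)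
    show "\<And>u v. E u v \<Longrightarrow> E v u" by (rule Esym)
    show "\<And>u. \<not> E u u" by (rule Eirr)
    show "\<And>u v. E u v \<Longrightarrow> \<sigma> u v = \<sigma> v u" by (rule ssym)
    show "\<And>u v. E u v \<Longrightarrow> \<sigma> u v = 1 \<or> \<sigma> u v = -1" by (rule sval)
    show "\<And>u. u \<in> V \<Longrightarrow> card {w\<in>V. E u w \<and> \<sigma> u w = 1} = 3"
      using deg_split[OF fin sval assms(4) assms(5)] by blast
    show "\<And>u. u \<in> V \<Longrightarrow> card {w\<in>V. E u w \<and> \<sigma> u w = -1} = 2"
      using deg_split[OF fin sval assms(4) assms(5)] by blast
    show "\<And>u. u \<in> V \<Longrightarrow> adj_sq V E \<sigma> u u = 5" using dg by simp
    show "\<And>u v. u \<in> V \<Longrightarrow> v \<in> V \<Longrightarrow> E u v \<Longrightarrow> \<sigma> u v = 1 \<Longrightarrow> adj_sq V E \<sigma> u v = 2"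
      using pa ab by simp
    show "\<And>u v. u \<in> V \<Longrightarrow> v \<in> V \<Longrightarrow> E u v \<Longrightarrow> \<sigma> u v = -1 \<Longrightarrow> adj_sq V E \<sigma> u v = 0"
      using pb ab by simp
    show "\<And>u v. u \<in> V \<Longrightarrow> v \<in> V \<Longrightarrow> u \<noteq> v \<Longrightarrow> \<not> E u v \<Longrightarrow> adj_sq V E \<sigma> u v = c"
      using pc by simp
  qed
  moreover obtain u v where "E u v" using ne unfolding edgeless_def by blast
  then have "u \<in> V" using Ein by blast
  ultimately show False by (rule SG.final)
qed


end
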